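(* Let $d\ge2$ be an integer, $p\in(0,1]$, $\lambda\in(0,1)$, $b=1-(1-p)\lambda$, and let $\bar F$ be the solution of $\bar F'(w)=\lambda(p\bar F(w)^d+(1-p)\bar F(w))-\bar F(w)$, $\bar F(0)=\lambda$. Then $$\int_0^\infty\bar F(w)\,dw=\frac{\lambda}{b}\sum_{n=0}^\infty\frac1{1+n(d-1)}\left(\frac{p\lambda^d}{b}\right)^n.$$ In particular, for $d=2$, $\int_0^\infty\bar F(w)\,dw=-\frac{\log\left(1-\frac{p\lambda^2}{b}\right)}{p\lambda}$.
   Context: $\int_0^\infty\bar F(w)\,dw$ is the mean workload (equivalently the mean queue length) of a server under the LL($d,p$) policy. *)

theory Defs
  imports "HOL-Analysis.Analysis"
begin

end

theory Submission
  imports Defs "HOL-Analysis.Analysis" begin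

lemma phi_deriv:
  fixes q b :: real and k :: nat
  assumes "0 \<le> q" "q < 1" "b > 0" "\<bar>x\<bar> < 1"
  shows "summable (\<lambda>n. q^n/(b*(n*k+1)) * x^(n*k+1))"
    "((\<lambda>x. \<Sum>n. q^n/(b*(n*k+1)) * x^(n*k+1)) has_field_derivative 1/(b*(1 - q*x^k))) (at x)"
proof -
  define S where "S = {-1<..<(1::real)}"
  have cS: "convex S" by (simp add: S_def)
  have d: "((\<lambda>x. q^n/(b*(n*k+1)) * x^(n*k+1)) has_field_derivative (q*y^k)^n / b) (at y within S)" for n y
  proof -
    have pos: "b + b*(real k * real n) > 0" using assms(3) by (simp add: add_pos_nonneg)
    show ?thesis
    apply (rule derivative_eq_intros refl)+
    using pos assms(3) by (simp add: field_simps power_mult power_mult_distrib)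
  qed
  have u: "uniformly_convergent_on S (\<lambda>n x. \<Sum>i<n. (q*x^k)^i / b)"
  proof (rule Weierstrass_m_test'_ev[where M = "\<lambda>n. q^n / b"])
    show "\<forall>\<^sub>F n in sequentially. \<forall>x\<in>S. norm ((q*x^k)^n / b) \<le> q^n / b"
    proof (rule always_eventually, intro allI ballI)
      fix n x assume "x \<in> S"
      hence "\<bar>x\<bar> \<le> 1" by (auto simp: S_def)
      hence "\<bar>x\<bar>^k \<le> 1" by (simp add: power_le_one)
      hence "\<bar>q * x^k\<bar> \<le> q" using assms by (simp add: abs_mult power_abs mult_left_le)
      hence "\<bar>q * x^k\<bar>^n \<le> q^n" by (simp add: power_mono)
      thus "norm ((q*x^k)^n / b) \<le> q^n / b" using assms
        by (simp add: power_abs divide_right_mono)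
    qed
    show "summable (\<lambda>n. q^n / b)" using assms by (intro summable_divide summable_geometric) simp
  qed
  have x: "x \<in> interior S" using assms by (simp add: S_def abs_less_iff)
  have s0: "summable (\<lambda>n. q^n/(b*(n*k+1)) * (0::real)^(n*k+1))" by simp
  note r = has_field_derivative_series'[OF cS d u _ s0 x]
  show "summable (\<lambda>n. q^n/(b*(n*k+1)) * x^(n*k+1))" using r by (simp add: S_def)
  have "\<bar>q * x^k\<bar> < 1"
  proof -
    have "\<bar>x\<bar>^k \<le> 1" using assms by (simp add: power_le_one)
    hence "\<bar>q * x^k\<bar> \<le> q" using assms by (simp add: abs_mult power_abs mult_left_le)
    thus ?thesis using assms by simp
  qed
  hence "(\<lambda>n. (q*x^k)^n / b) sums (1/(1 - q*x^k) / b)"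
    by (intro sums_divide geometric_sums) (simp only: real_norm_def)
  hence "(\<Sum>n. (q*x^k)^n / b) = 1/(b*(1 - q*x^k))" by (simp add: sums_iff)
  thus "((\<lambda>x. \<Sum>n. q^n/(b*(n*k+1)) * x^(n*k+1)) has_field_derivative 1/(b*(1 - q*x^k))) (at x)"
    using r by (simp add: S_def)
qed


theorem proposition4p7:
  fixes d :: nat and p lam b :: real and F :: "real \<Rightarrow> real"
  assumes hd: "d \<ge> 2"
    and hp: "0 < p" "p \<le> 1"
    and hlam: "0 < lam" "lam < 1"
    and hb: "b = 1 - (1 - p) * lam"
    and hF0: "F 0 = lam"
    and hODE: "\<And>w. w \<ge> 0 \<Longrightarrow>
       (F has_real_derivative (lam * (p * F w ^ d + (1 - p) * F w) - F w)) (at w within {0..})"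
  shows "(F has_integral
            (lam / b * (\<Sum>n. 1 / (1 + real n * (real d - 1)) * (p * lam ^ d / b) ^ n))) {0..}
         \<and> (d = 2 \<longrightarrow> integral {0..} F = - ln (1 - p * lam\<^sup>2 / b) / (p * lam))"
proof -
  obtain m where dm: "d = Suc (Suc m)" using hd by (metis add_2_eq_Suc le_Suc_ex)
  define k where "k = Suc m"
  have dk: "d = Suc k" by (simp add: dm k_def)
  have rdk: "real d - 1 = real k" by (simp add: dk)
  have hbpl: "p * lam < b" using hlam by (simp add: hb algebra_simps)
  have hb0: "b > 0" using hbpl hp hlam by (smt (verit) mult_pos_pos)
  define q where "q = p * lam / b"
  have q0: "0 \<le> q" and q1: "q < 1" using hbpl hb0 hp hlam by (auto simp: q_def)
  define D where "D w = lam * (p * F w ^ d + (1 - p) * F w) - F w" for w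
  have hD: "D w = - F w * (b - p * lam * F w ^ k)" for w
    by (simp add: D_def hb dk algebra_simps)
  have F': "(F has_real_derivative D w) (at w within {0..})" if "w \<ge> 0" for w
    using hODE[OF that] by (simp add: D_def)
  have contF: "continuous_on {0..} F"
    using F' by (auto simp: continuous_on_eq_continuous_within intro: DERIV_continuous)
  have Fpos: "F T > 0" if T: "T \<ge> 0" for T
  proof -
    define g where "g w = b - p * lam * F w ^ k" for w
    have cg: "continuous_on {0..T} g" unfolding g_def
      by (intro continuous_intros continuous_on_subset[OF contF]) auto
    define G where "G w = integral {0..w} g" for w
    define H where "H w = F w * exp (G w)" for w
    have "(H has_real_derivative 0) (at w within {0..T})" if w: "w \<in> {0..T}" for w
    proof -
      have a: "(F has_real_derivative D w) (at w within {0..T})"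
        using w by (intro DERIV_subset[OF F']) auto
      have bb: "(G has_real_derivative g w) (at w within {0..T})"
        unfolding G_def by (rule integral_has_real_derivative[OF cg w])
      have c: "((\<lambda>w. exp (G w)) has_real_derivative exp (G w) * g w) (at w within {0..T})"
        by (rule DERIV_chain2[OF DERIV_exp bb])
      have Heq: "H = (\<lambda>x. F x * exp (G x))" by (simp add: fun_eq_iff H_def)
      from DERIV_mult[OF a c] show ?thesis
        unfolding Heq by (simp add: hD g_def algebra_simps)
    qed
    then obtain c where c: "\<forall>x\<in>{0..T}. H x = c"
      using has_field_derivative_zero_constant[of "{0..T}" H] by auto
    have "H T = H 0" using c T by auto
    also have "H 0 = lam" by (simp add: H_def G_def hF0)
    finally have "F T * exp (G T) = lam" by (simp add: H_def)
    thus ?thesis using hlam by (metis exp_gt_zero zero_less_mult_pos2)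
  qed
  define C where "C = 1 / lam ^ k - q"
  define Q where "Q w = (inverse (F w ^ k) - q) * exp (-(real k * b) * w)" for w
  have "(Q has_real_derivative 0) (at w within {0..})" if w: "w \<in> {0..}" for w
  proof -
    have Fw: "F w > 0" using w Fpos by auto
    have Qeq: "Q = (\<lambda>w. (inverse (F w ^ k) - q) * exp (-(real k * b) * w))" by (simp add: fun_eq_iff Q_def)
    have a1: "((\<lambda>w. F w ^ k) has_real_derivative of_nat k * (D w * F w ^ (k - Suc 0))) (at w within {0..})"
      using F' w by (intro DERIV_power) auto
    have a3: "((\<lambda>w. inverse (F w ^ k) - q) has_real_derivative
       (- (of_nat k * (D w * F w ^ (k - Suc 0)) * inverse ((F w ^ k) ^ Suc (Suc 0)))) - 0) (at w within {0..})"
      using Fw by (intro DERIV_diff DERIV_inverse_fun a1 DERIV_const) auto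
    have e: "((\<lambda>w. exp (-(real k*b)*w)) has_real_derivative exp(-(real k*b)*w) * (-(real k*b) * 1)) (at w within {0..})"
      by (intro DERIV_chain2[OF DERIV_exp] DERIV_cmult DERIV_ident)
    have v: "(- (of_nat k * (D w * F w ^ (k - Suc 0)) * inverse ((F w ^ k) ^ Suc (Suc 0))) - 0) * exp(-(real k*b)*w)
       + exp(-(real k*b)*w) * (-(real k*b) * 1) * (inverse (F w ^ k) - q) = 0"
      using Fw hb0 by (simp add: hD q_def k_def field_simps)
    show ?thesis unfolding Qeq using DERIV_mult[OF a3 e] v by simp
  qed
  then obtain c where c: "\<forall>x\<in>{0..}. Q x = c"
    using has_field_derivative_zero_constant[of "{0..}" Q] by auto
  have Q0: "Q 0 = C" by (simp add: Q_def C_def hF0 inverse_eq_divide)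
  have uF: "1 / F w ^ k = q + C * exp (real k * b * w)" if "w \<ge> 0" for w
  proof -
    have "Q w = C" using c Q0 that by auto
    hence "(1 / F w ^ k - q) = C / exp (-(real k * b) * w)" by (simp add: Q_def field_simps inverse_eq_divide)
    thus ?thesis by (simp add: exp_minus field_simps)
  qed
  have lk: "lam ^ k \<le> 1" "lam ^ k > 0" using hlam by (auto simp: power_le_one)
  have C0: "C > 0"
  proof -
    have "1 \<le> 1 / lam ^ k" using lk by simp
    thus ?thesis using q1 by (simp add: C_def)
  qed
  have Fle: "F w \<le> lam" if w: "w \<ge> 0" for w
  proof -
    have "1 \<le> exp (real k * b * w)" using w hb0 by simp
    hence "C \<le> C * exp (real k * b * w)" using C0 by simp
    hence "1 / lam ^ k \<le> 1 / F w ^ k" using uF[OF w] by (simp add: C_def)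
    moreover have "F w ^ k > 0" using Fpos[OF w] by simp
    ultimately have "F w ^ k \<le> lam ^ k" using lk
      by (simp add: inverse_eq_divide[symmetric])
    hence "F w ^ Suc m \<le> lam ^ Suc m" by (simp add: k_def)
    from power_le_imp_le_base[OF this] hlam(1) show ?thesis by simp
  qed
  have Fk0: "((\<lambda>w. F w ^ k) \<longlongrightarrow> 0) at_top"
  proof (rule tendsto_sandwich[where f = "\<lambda>_. 0" and h = "\<lambda>w. exp (-(real k * b) * w) / C"])
    show "\<forall>\<^sub>F w in at_top. 0 \<le> F w ^ k"
      by (rule eventually_at_top_linorderI[of 0]) (use Fpos in \<open>simp add: less_imp_le\<close>)
    show "\<forall>\<^sub>F w in at_top. F w ^ k \<le> exp (-(real k * b) * w) / C"
    proof (rule eventually_at_top_linorderI[of 0])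
      fix w :: real assume w: "w \<ge> 0"
      have "C * exp (real k * b * w) \<le> 1 / F w ^ k" using uF[OF w] q0 by simp
      thus "F w ^ k \<le> exp (-(real k * b) * w) / C"
        using C0 Fpos[OF w] by (simp add: exp_minus field_simps)
    qed
    show "((\<lambda>_. 0::real) \<longlongrightarrow> 0) at_top" by simp
    have "((\<lambda>w. exp (-(real k * b) * w)) \<longlongrightarrow> 0) at_top"
      using hb0 unfolding k_def by (intro filterlim_compose[OF exp_at_bot]
              filterlim_tendsto_neg_mult_at_bot[OF tendsto_const] filterlim_ident) auto
    thus "((\<lambda>w. exp (-(real k * b) * w) / C) \<longlongrightarrow> 0) at_top"
      using tendsto_divide_zero by blast
  qed
  have F0: "(F \<longlongrightarrow> 0) at_top"
  proof -
    have "((\<lambda>w. root k (F w ^ k)) \<longlongrightarrow> root k 0) at_top" by (rule tendsto_real_root[OF Fk0])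
    moreover have "\<forall>\<^sub>F w in at_top. root k (F w ^ k) = F w"
    proof (rule eventually_at_top_linorderI[of 0])
      fix w :: real assume "w \<ge> 0"
      hence "0 \<le> F w" using Fpos by (simp add: less_imp_le)
      thus "root k (F w ^ k) = F w" using real_root_power_cancel[of k "F w"] by (simp add: k_def)
    qed
    ultimately show ?thesis by (simp add: tendsto_cong)
  qed
  define Phi where "Phi x = (\<Sum>n. q^n/(b*(n*k+1)) * x^(n*k+1))" for x :: real
  have PhiD: "(Phi has_real_derivative 1/(b*(1 - q*x^k))) (at x)" if "\<bar>x\<bar> < 1" for x
    unfolding Phi_def[abs_def] by (rule phi_deriv(2)[OF q0 q1 hb0 that])
  have Phi0: "Phi 0 = 0" by (simp add: Phi_def)
  have Phic: "isCont Phi 0" using PhiD[of 0] by (intro DERIV_isCont) auto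
  define A where "A w = - Phi (F w)" for w
  have AD: "(A has_real_derivative F w) (at w within {0..})" if w: "w \<ge> 0" for w
  proof -
    have Fw: "0 < F w" "F w \<le> lam" using Fpos[OF w] Fle[OF w] by auto
    hence ab: "\<bar>F w\<bar> < 1" using hlam by simp
    have Fk1: "F w ^ k \<le> 1" using Fw hlam by (simp add: power_le_one)
    have nz: "b - p * lam * F w ^ k > 0"
    proof -
      have "p * lam * F w ^ k \<le> p * lam" using Fk1 hp hlam by (simp add: mult_left_le)
      thus ?thesis using hbpl by simp
    qed
    have "((\<lambda>w. Phi (F w)) has_real_derivative 1/(b*(1 - q*F w^k)) * D w) (at w within {0..})"
      by (rule DERIV_chain2[OF PhiD[OF ab] F'[OF w]])
    from DERIV_minus[OF this] have "(A has_real_derivative - (1/(b*(1 - q*F w^k)) * D w)) (at w within {0..})"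
      by (simp add: A_def[abs_def])
    moreover have "- (1/(b*(1 - q*F w^k)) * D w) = F w"
    proof -
      have "b*(1 - q*F w^k) = b - p * lam * F w ^ k" using hb0 by (simp add: q_def algebra_simps)
      thus ?thesis using nz by (simp add: hD)
    qed
    ultimately show ?thesis by simp
  qed
  have intF: "(F has_integral (Phi lam - Phi (F y))) {0..y}" if y: "y \<ge> 0" for y
  proof -
    have "(F has_integral (A y - A 0)) {0..y}"
    proof (rule fundamental_theorem_of_calculus[OF y])
      fix x assume x: "x \<in> {0..y}"
      show "(A has_vector_derivative F x) (at x within {0..y})"
        using x by (auto simp: has_real_derivative_iff_has_vector_derivative[symmetric]
             intro!: DERIV_subset[OF AD])
    qed
    thus ?thesis by (simp add: A_def hF0)
  qed
  have HI: "(F has_integral Phi lam) {0..}"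
  proof (rule has_integral_to_inf)
    show "F integrable_on {0..y}" for y
    proof (cases "y \<ge> 0")
      case True thus ?thesis using intF by blast
    next
      case False thus ?thesis by (simp add: integrable_on_empty)
    qed
    have "((\<lambda>y. Phi lam - Phi (F y)) \<longlongrightarrow> Phi lam - Phi 0) at_top"
      by (intro tendsto_intros isCont_tendsto_compose[OF Phic F0])
    moreover have "\<forall>\<^sub>F y in at_top. Phi lam - Phi (F y) = integral {0..y} F"
      by (rule eventually_at_top_linorderI[of 0]) (metis intF integral_unique)
    ultimately show "((\<lambda>y. integral {0..y} F) \<longlongrightarrow> Phi lam) at_top"
      using Phi0 by (simp add: tendsto_cong)
    show "0 \<le> F y" if "y \<ge> 0" for y using Fpos[OF that] by simp
  qed
  define t where "t n = 1 / (1 + real n * (real d - 1)) * (p * lam ^ d / b) ^ n" for n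
  have teq: "q^n/(b*(n*k+1)) * lam^(n*k+1) = lam / b * t n" for n
    using hb0 by (simp add: t_def q_def rdk dk power_mult_distrib power_mult field_simps)
  have "summable (\<lambda>n. q^n/(b*(n*k+1)) * lam^(n*k+1))"
    by (rule phi_deriv(1)[OF q0 q1 hb0]) (use hlam in simp)
  hence sl: "summable (\<lambda>n. lam / b * t n)" by (simp only: teq)
  hence st: "summable t" using hlam hb0 by (simp add: summable_cmult_iff)
  have PL: "Phi lam = lam / b * (\<Sum>n. t n)"
    unfolding Phi_def teq by (rule suminf_mult[OF st])
  have d2: "integral {0..} F = - ln (1 - p * lam\<^sup>2 / b) / (p * lam)" if "d = 2"
  proof -
    define r where "r = p * lam\<^sup>2 / b"
    have r0: "0 < r" using hp hlam hb0 by (simp add: r_def)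
    have r1: "r < 1"
    proof -
      have "p * lam^2 < p * lam" using hp hlam by (simp add: power2_eq_square)
      thus ?thesis using hbpl hb0 by (simp add: r_def)
    qed
    have tr: "t n = r^n / (real n + 1)" for n using that by (simp add: t_def r_def)
    have "ln (1 - r) = (\<Sum>n. (-1)^n * (1 / real (n + 1)) * ((1 - r) - 1)^(Suc n))"
      using r0 r1 by (intro ln_series) auto
    also have "(\<lambda>n. (-1)^n * (1 / real (n + 1)) * ((1 - r) - 1)^(Suc n)) = (\<lambda>n. - r * t n)"
    proof
      fix n
      have e: "(-1::real)^n * (-r)^(Suc n) = - (r^Suc n)" by (induct n) (auto simp: algebra_simps)
      have "(-1)^n * (1 / real (n + 1)) * ((1 - r) - 1)^(Suc n) = ((-1::real)^n * (-r)^(Suc n)) / (real n + 1)"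
        by simp
      also have "\<dots> = - r * (r^n / (real n + 1))" by (simp only: e) simp
      finally show "(-1)^n * (1 / real (n + 1)) * ((1 - r) - 1)^(Suc n) = - r * t n"
        by (simp only: tr)
    qed
    also have "(\<Sum>n. - r * t n) = - r * (\<Sum>n. t n)" by (rule suminf_mult[OF st])
    finally have "ln (1 - r) = - r * (\<Sum>n. t n)" .
    hence "- ln (1 - r) / (p * lam) = lam / b * (\<Sum>n. t n)"
      using hp hlam hb0 by (simp add: r_def power2_eq_square field_simps)
    moreover have "integral {0..} F = Phi lam" using HI by (rule integral_unique)
    ultimately show ?thesis using PL by (simp add: r_def)
  qed
  have tt: "t = (\<lambda>n. 1 / (1 + real n * (real d - 1)) * (p * lam ^ d / b) ^ n)"
    by (simp add: fun_eq_iff t_def)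
  from HI d2 show ?thesis unfolding PL tt by blast
qed

end
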